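(* Let $V_A, V_B \subseteq \mathbb{R}^d$ be $k$-dimensional subspaces, let $w\in\mathbb{R}^d$ with $\|w\|=1$, and set $K_A^* = \|\Pi_{V_A} w\|$, $K_B^* = \|\Pi_{V_B} w\|$, $K_{AB}^* = \|\Pi_{V_A+V_B} w\|$, and $\Delta = K_{AB}^* - \max(K_A^*,K_B^* )$. Assume $K_A^* \ge K_B^*$. Let $\eta = \eta(V_A,V_B,w)$ be the private information value of $V_B$ relative to $V_A$. Then $$\Delta = \sqrt{(K_A^* )^2 + \eta^2} - K_A^*,$$ and $$\frac{\eta^2}{2K_A^* + \eta} \le \Delta \le \eta.$$ Both bounds are tight: the upper bound holds with equality when $K_A^* = 0$, and the lower bound is asymptotically tight as $\eta \to 0$ (with $K_A^*>0$ fixed), in the sense that $\Delta$ and $\eta^2/(2K_A^*+\eta)$ both equal $\eta^2/(2K_A^* )$ up to $o(\eta^2)$.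
   Context: $\Pi_V$ denotes orthogonal projection onto a subspace $V$; $V_A+V_B=\{u+v: u\in V_A, v\in V_B\}$. Principal angles $\theta_1,\dots,\theta_k\in[0,\pi/2]$ between $V_A$ and $V_B$ are defined recursively by $\cos\theta_i = \max\{\langle u,v\rangle : u\in V_A,\|u\|=1,u\perp u_1,\dots,u_{i-1};\ v\in V_B,\|v\|=1,v\perp v_1,\dots,v_{i-1}\}$, with maximizers $(u_i,v_i)$ (principal vectors) satisfying $\langle u_i,v_j\rangle=\cos\theta_i\,\delta_{ij}$. For $\theta_i>0$ set $\tilde v_i=(v_i-\cos\theta_i\,u_i)/\sin\theta_i$. The private information value is $\eta(V_A,V_B,w)=\sqrt{\sum_{i:\theta_i>0}\langle w,\tilde v_i\rangle^2}$. (Interpretation: $K(y)=\langle w,h(y)\rangle$ is a linear scoring function on representations, $K_A^*, K_B^*$ are the single-model optimal scores, $K_{AB}^*$ the debate-optimal score, and $\Delta$ the debate advantage.) *)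

theory Defs
  imports "HOL-Analysis.Analysis" "HOL-Library.Landau_Symbols"
begin

definition orth_proj :: "'a::euclidean_space set \<Rightarrow> 'a \<Rightarrow> 'a" where
  "orth_proj V w = (THE p. p \<in> V \<and> (\<forall>x\<in>V. inner (w - p) x = 0))"

definition subspace_sum :: "'a::euclidean_space set \<Rightarrow> 'a set \<Rightarrow> 'a set" where
  "subspace_sum VA VB = {u + v | u v. u \<in> VA \<and> v \<in> VB}"

definition principal_vectors ::
  "'a::euclidean_space set \<Rightarrow> 'a set \<Rightarrow> nat \<Rightarrow> (nat \<Rightarrow> 'a) \<Rightarrow> (nat \<Rightarrow> 'a) \<Rightarrow> bool" where
  "principal_vectors VA VB k u v \<longleftrightarrow>
     (\<forall>i<k. u i \<in> VA \<and> norm (u i) = 1 \<and> (\<forall>j<i. inner (u i) (u j) = 0) \<and>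
            v i \<in> VB \<and> norm (v i) = 1 \<and> (\<forall>j<i. inner (v i) (v j) = 0) \<and>
            (\<forall>x y. x \<in> VA \<and> norm x = 1 \<and> (\<forall>j<i. inner x (u j) = 0) \<and>
                   y \<in> VB \<and> norm y = 1 \<and> (\<forall>j<i. inner y (v j) = 0)
                   \<longrightarrow> inner x y \<le> inner (u i) (v i)))"

definition vtilde :: "(nat \<Rightarrow> 'a::euclidean_space) \<Rightarrow> (nat \<Rightarrow> 'a) \<Rightarrow> nat \<Rightarrow> 'a" where
  "vtilde u v i = (let \<theta> = arccos (inner (u i) (v i)) in
                   (1 / sin \<theta>) *\<^sub>R (v i - cos \<theta> *\<^sub>R u i))"

definition private_info ::
  "nat \<Rightarrow> (nat \<Rightarrow> 'a::euclidean_space) \<Rightarrow> (nat \<Rightarrow> 'a) \<Rightarrow> 'a \<Rightarrow> real" where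
  "private_info k u v w =
     sqrt (\<Sum>i\<in>{i. i < k \<and> arccos (inner (u i) (v i)) > 0}. (inner w (vtilde u v i))\<^sup>2)"

end

theory Submission imports Defs begin

lemma small_sq:
  fixes f :: "real \<Rightarrow> real"
  assumes d0: "d0 > 0" and C: "C \<ge> 0" and b: "\<And>e. \<bar>e\<bar> < d0 \<Longrightarrow> \<bar>f e\<bar> \<le> C * \<bar>e\<bar> ^ 3"
  shows "f \<in> o[at 0](\<lambda>e. e\<^sup>2)"
proof (rule landau_o.smallI)
  fix c :: real assume c: "c > 0"
  define d where "d = min d0 (c / (C + 1))"
  have d: "d > 0" unfolding d_def using d0 c C by simp
  have "\<bar>f e\<bar> \<le> c * \<bar>e\<^sup>2\<bar>" if e: "\<bar>e\<bar> < d" for e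
  proof -
    have "\<bar>f e\<bar> \<le> C * \<bar>e\<bar> ^ 3" using b e unfolding d_def by simp
    also have "\<dots> = (C * \<bar>e\<bar>) * \<bar>e\<^sup>2\<bar>" by (simp add: power2_eq_square power3_eq_cube abs_mult)
    also have "\<dots> \<le> c * \<bar>e\<^sup>2\<bar>"
    proof (rule mult_right_mono)
      have "\<bar>e\<bar> \<le> c / (C + 1)" using e unfolding d_def by simp
      then have "(C + 1) * \<bar>e\<bar> \<le> c" using C by (simp add: field_simps)
      then show "C * \<bar>e\<bar> \<le> c" by (simp add: algebra_simps)
    qed simp
    finally show ?thesis .
  qed
  then show "eventually (\<lambda>x. norm (f x) \<le> c * norm (x\<^sup>2)) (at 0)"
    unfolding eventually_at using d by (auto simp: dist_real_def)
qed

lemma asym1: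
  fixes a :: real assumes a: "a > 0"
  shows "(\<lambda>e::real. (sqrt (a\<^sup>2 + e\<^sup>2) - a) - e\<^sup>2 / (2 * a)) \<in> o[at 0](\<lambda>e. e\<^sup>2)"
proof (rule small_sq[of 1 "1 / ((2*a)\<^sup>2 * (2*a))"])
  fix e :: real assume e1: "\<bar>e\<bar> < 1"
  define s where "s = sqrt (a\<^sup>2 + e\<^sup>2)"
  define q where "q = e\<^sup>2 / (2 * a)"
  have s2: "s\<^sup>2 = a\<^sup>2 + e\<^sup>2" unfolding s_def by simp
  have sa: "s \<ge> a" unfolding s_def using a by (simp add: real_le_rsqrt)
  have q0: "q \<ge> 0" unfolding q_def using a by simp
  have qe: "e\<^sup>2 = 2 * a * q" unfolding q_def using a by simp
  have sb: "s \<le> a + q"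
  proof (rule power2_le_imp_le)
    have "(a + q)\<^sup>2 = s\<^sup>2 + q\<^sup>2" unfolding power2_sum s2 qe by simp
    then show "s\<^sup>2 \<le> (a + q)\<^sup>2" by simp
    show "0 \<le> a + q" using a q0 by simp
  qed
  have eq1: "(s - a)\<^sup>2 = - (2 * a) * ((s - a) - q)"
  proof -
    have "(s - a)\<^sup>2 = s\<^sup>2 + a\<^sup>2 - 2 * s * a" by (rule power2_diff)
    also have "\<dots> = (a\<^sup>2 + 2 * a * q) + a\<^sup>2 - 2 * s * a" unfolding s2 qe ..
    also have "\<dots> = - (2 * a) * ((s - a) - q)" by (simp add: power2_eq_square algebra_simps)
    finally show ?thesis .
  qed
  have eq: "(s - a) - q = - ((s-a)\<^sup>2/(2*a))"
    unfolding eq1 using a by simp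
  have "(s-a)\<^sup>2 \<le> q\<^sup>2" using sa sb by (intro power_mono) auto
  then have "\<bar>(s - a) - q\<bar> \<le> q\<^sup>2 / (2*a)"
    unfolding eq using a by (simp add: divide_right_mono)
  also have "\<dots> = (e\<^sup>2)\<^sup>2 / ((2*a)\<^sup>2 * (2*a))" unfolding q_def by (simp add: power_divide)
  also have "\<dots> \<le> \<bar>e\<bar> ^ 3 / ((2*a)\<^sup>2 * (2*a))"
  proof (rule divide_right_mono)
    have "(e\<^sup>2)\<^sup>2 = (\<bar>e\<bar>\<^sup>2)\<^sup>2" by simp
    also have "\<dots> = \<bar>e\<bar> ^ 3 * \<bar>e\<bar>" by (simp only: power2_eq_square power3_eq_cube mult.assoc)
    also have "\<dots> \<le> \<bar>e\<bar> ^ 3 * 1" using e1 by (intro mult_left_mono) auto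
    finally show "(e\<^sup>2)\<^sup>2 \<le> \<bar>e\<bar> ^ 3" by simp
  qed (use a in simp)
  also have "\<dots> = 1 / ((2*a)\<^sup>2 * (2*a)) * \<bar>e\<bar> ^ 3" by simp
  finally show "\<bar>(sqrt (a\<^sup>2 + e\<^sup>2) - a) - e\<^sup>2 / (2 * a)\<bar> \<le> 1 / ((2*a)\<^sup>2 * (2*a)) * \<bar>e\<bar> ^ 3"
    unfolding s_def q_def .
qed (use a in auto)

lemma asym2:
  fixes a :: real assumes a: "a > 0"
  shows "(\<lambda>e::real. e\<^sup>2 / (2 * a + e) - e\<^sup>2 / (2 * a)) \<in> o[at 0](\<lambda>e. e\<^sup>2)"
proof (rule small_sq[of a "1 / (2 * a * a)"])
  fix e :: real assume e: "\<bar>e\<bar> < a"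
  have p: "2 * a + e > a" using e by linarith
  have "e\<^sup>2 / (2 * a + e) - e\<^sup>2 / (2 * a) = (e\<^sup>2 * (2 * a) - e\<^sup>2 * (2 * a + e)) / ((2 * a + e) * (2 * a))"
    using a p by (intro diff_frac_eq) auto
  also have "e\<^sup>2 * (2 * a) - e\<^sup>2 * (2 * a + e) = - (e ^ 3)"
    by (simp add: power2_eq_square power3_eq_cube algebra_simps)
  finally have eq: "e\<^sup>2 / (2 * a + e) - e\<^sup>2 / (2 * a) = - (e ^ 3 / ((2 * a + e) * (2 * a)))" by simp
  have "\<bar>e ^ 3 / ((2 * a + e) * (2 * a))\<bar> = \<bar>e\<bar> ^ 3 / ((2 * a + e) * (2 * a))"
    using a p by (simp add: abs_mult power_abs)
  also have "\<dots> \<le> \<bar>e\<bar> ^ 3 / (a * (2 * a))"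
    using a p by (intro divide_left_mono mult_right_mono) auto
  also have "\<dots> = 1 / (2 * a * a) * \<bar>e\<bar> ^ 3" by (simp add: algebra_simps)
  finally show "\<bar>e\<^sup>2 / (2 * a + e) - e\<^sup>2 / (2 * a)\<bar> \<le> 1 / (2 * a * a) * \<bar>e\<bar> ^ 3"
    unfolding eq by simp
qed (use a in auto)
lemma orth_proj_unique:
  fixes S :: "'a::euclidean_space set"
  assumes "subspace S" "p \<in> S" "\<forall>x\<in>S. inner (w - p) x = 0"
  shows "orth_proj S w = p"
  unfolding orth_proj_def
proof (rule the_equality)
  show "p \<in> S \<and> (\<forall>x\<in>S. inner (w - p) x = 0)" using assms by auto
  fix q assume q: "q \<in> S \<and> (\<forall>x\<in>S. inner (w - q) x = 0)"
  have d: "p - q \<in> S" using assms q by (simp add: subspace_diff)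
  have "inner (w - q) (p - q) - inner (w - p) (p - q) = 0" using d q assms by simp
  then have "inner (p - q) (p - q) = 0" by (simp add: inner_diff_left inner_diff_right algebra_simps)
  then show "q = p" by simp
qed

lemma onb_proj:
  fixes f :: "'i \<Rightarrow> 'a::euclidean_space"
  assumes fin: "finite I" and on: "\<And>i j. i\<in>I \<Longrightarrow> j\<in>I \<Longrightarrow> inner (f i) (f j) = (if i = j then 1 else 0)"
  shows "norm (orth_proj (span (f`I)) w) ^ 2 = (\<Sum>i\<in>I. (inner w (f i))\<^sup>2)"
proof -
  define p where "p = (\<Sum>i\<in>I. inner w (f i) *\<^sub>R f i)"
  have pin: "p \<in> span (f`I)" unfolding p_def
    by (intro span_sum span_scale span_base) auto
  have ip: "inner p (f j) = inner w (f j)" if "j \<in> I" for j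
  proof -
    have "inner p (f j) = (\<Sum>i\<in>I. (if i = j then inner w (f i) else 0))"
      unfolding p_def inner_sum_left using on that by (intro sum.cong) auto
    also have "\<dots> = inner w (f j)" using fin that by (simp add: sum.delta')
    finally show ?thesis .
  qed
  have orth: "\<forall>x\<in>span (f`I). inner (w - p) x = 0"
  proof
    fix x assume "x \<in> span (f`I)"
    then have "orthogonal (w - p) x"
      by (rule orthogonal_to_span) (auto simp: orthogonal_def inner_diff_left ip)
    then show "inner (w - p) x = 0" by (simp add: orthogonal_def)
  qed
  have "orth_proj (span (f`I)) w = p" by (rule orth_proj_unique[OF subspace_span pin orth])
  moreover have "norm p ^ 2 = (\<Sum>i\<in>I. (inner w (f i))\<^sup>2)"
  proof -
    have "norm p ^ 2 = inner p p" by (simp add: power2_norm_eq_inner)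
    also have "\<dots> = (\<Sum>i\<in>I. inner w (f i) * inner p (f i))"
      by (subst (2) p_def) (simp add: inner_sum_right)
    also have "\<dots> = (\<Sum>i\<in>I. (inner w (f i))\<^sup>2)"
      by (intro sum.cong) (auto simp: ip power2_eq_square)
    finally show ?thesis .
  qed
  ultimately show ?thesis by simp
qed

lemma aux_cs:
  fixes c s :: real
  assumes "(c * c + s * s) / sqrt (c\<^sup>2 + s\<^sup>2) \<le> c"
  shows "s = 0"
proof (cases "sqrt (c\<^sup>2 + s\<^sup>2) = 0")
  case True
  then have "c\<^sup>2 + s\<^sup>2 = 0" by simp
  then show ?thesis by (simp add: sum_power2_eq_zero_iff)
next
  case False
  define r where "r = sqrt (c\<^sup>2 + s\<^sup>2)"
  have r0: "r > 0" using False unfolding r_def by (simp add: order_neq_le_trans)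
  have rr: "r * r = c * c + s * s" unfolding r_def by (simp add: power2_eq_square[symmetric])
  have "(c * c + s * s) / r = r" unfolding rr[symmetric] using r0 by simp
  then have "r \<le> c" using assms unfolding r_def[symmetric] by simp
  then have "r * r \<le> c * c" using r0 by (intro mult_mono) auto
  then have "s * s \<le> 0" using rr by simp
  then have "s * s = 0" using zero_le_square[of s] by linarith
  then show ?thesis by simp
qed

lemma onb_span:
  fixes g :: "nat \<Rightarrow> 'a::euclidean_space"
  assumes V: "subspace V" and d: "dim V = k" and gV: "\<And>i. i < k \<Longrightarrow> g i \<in> V"
    and on: "\<And>i j. i < k \<Longrightarrow> j < k \<Longrightarrow> inner (g i) (g j) = (if i = j then 1 else 0)"
  shows "V = span (g ` {..<k})"
proof -
  have sub: "g ` {..<k} \<subseteq> V" using gV by auto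
  have inj: "inj_on g {..<k}"
  proof (rule inj_onI)
    fix i j assume "i \<in> {..<k}" "j \<in> {..<k}" "g i = g j"
    then show "i = j" using on[of i j] on[of i i] by (auto split: if_splits)
  qed
  have ind: "independent (g ` {..<k})"
  proof (rule pairwise_orthogonal_independent)
    show "pairwise orthogonal (g ` {..<k})"
      unfolding pairwise_def orthogonal_def using on by (auto split: if_splits)
    show "0 \<notin> g ` {..<k}" using on by force
  qed
  have "card (g ` {..<k}) = k" using inj by (simp add: card_image)
  then have "V \<subseteq> span (g ` {..<k})" using card_ge_dim_independent[OF sub ind] d by simp
  then show ?thesis using span_subspace[OF sub _ V] by simp
qed

lemma final_real:
  fixes KA KAB \<eta> :: real
  assumes KA: "KA \<ge> 0" and e: "\<eta> \<ge> 0" and KAB: "KAB \<ge> 0" and eq: "KAB\<^sup>2 = KA\<^sup>2 + \<eta>\<^sup>2"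
  shows "KAB - KA = sqrt (KA\<^sup>2 + \<eta>\<^sup>2) - KA
        \<and> \<eta>\<^sup>2 / (2 * KA + \<eta>) \<le> KAB - KA \<and> KAB - KA \<le> \<eta>
        \<and> (KA = 0 \<longrightarrow> KAB - KA = \<eta>)"
proof -
  have s: "KAB = sqrt (KA\<^sup>2 + \<eta>\<^sup>2)" using KAB eq by (metis real_sqrt_abs abs_of_nonneg)
  have up: "KAB \<le> KA + \<eta>"
  proof -
    have "KA\<^sup>2 + \<eta>\<^sup>2 \<le> (KA + \<eta>)\<^sup>2" using KA e by (simp add: power2_sum)
    then have "sqrt (KA\<^sup>2 + \<eta>\<^sup>2) \<le> sqrt ((KA + \<eta>)\<^sup>2)" by (rule real_sqrt_le_mono)
    then show ?thesis using s KA e by simp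
  qed
  have geKA: "KAB \<ge> KA" and gee: "KAB \<ge> \<eta>" using s by (auto intro: real_le_rsqrt)
  have lo: "\<eta>\<^sup>2 / (2 * KA + \<eta>) \<le> KAB - KA"
  proof (cases "2 * KA + \<eta> = 0")
    case True then show ?thesis using geKA by simp
  next
    case False
    then have pos: "KAB + KA > 0" using KA e gee by linarith
    have "(KAB - KA) * (KAB + KA) = \<eta>\<^sup>2" using eq by (simp add: power2_eq_square algebra_simps)
    then have "KAB - KA = \<eta>\<^sup>2 / (KAB + KA)" using pos by (simp add: eq_divide_eq)
    moreover have "\<eta>\<^sup>2 / (2 * KA + \<eta>) \<le> \<eta>\<^sup>2 / (KAB + KA)"
      using pos up by (intro divide_left_mono) auto
    ultimately show ?thesis by simp
  qed
  have z: "KA = 0 \<longrightarrow> KAB - KA = \<eta>" using s e by simp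
  show ?thesis using s lo up z by simp
qed
theorem theorem2p6:
  fixes VA VB :: "(real ^ 'd) set" and w :: "real ^ 'd" and k :: nat
    and u v :: "nat \<Rightarrow> real ^ 'd"
  assumes "subspace VA" and "subspace VB"
    and "dim VA = k" and "dim VB = k"
    and "norm w = 1"
    and "principal_vectors VA VB k u v"
    and "norm (orth_proj VA w) \<ge> norm (orth_proj VB w)"
  shows
    "let KA = norm (orth_proj VA w); KB = norm (orth_proj VB w);
         KAB = norm (orth_proj (subspace_sum VA VB) w);
         \<Delta> = KAB - max KA KB;
         \<eta> = private_info k u v w
     in \<Delta> = sqrt (KA\<^sup>2 + \<eta>\<^sup>2) - KA
        \<and> \<eta>\<^sup>2 / (2 * KA + \<eta>) \<le> \<Delta> \<and> \<Delta> \<le> \<eta>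
        \<and> (KA = 0 \<longrightarrow> \<Delta> = \<eta>)
        \<and> (KA > 0 \<longrightarrow>
             (\<lambda>e::real. (sqrt (KA\<^sup>2 + e\<^sup>2) - KA) - e\<^sup>2 / (2 * KA)) \<in> o[at 0](\<lambda>e. e\<^sup>2)
           \<and> (\<lambda>e::real. e\<^sup>2 / (2 * KA + e) - e\<^sup>2 / (2 * KA)) \<in> o[at 0](\<lambda>e. e\<^sup>2))"
proof -
  note PV = assms(6)[unfolded principal_vectors_def]
  define c where "c i = inner (u i) (v i)" for i
  have uA: "u i \<in> VA" and vB: "v i \<in> VB" and nu: "norm (u i) = 1" and nv: "norm (v i) = 1"
    if "i < k" for i using PV that by auto
  have maxi: "inner x y \<le> c i"
    if "i < k" "x \<in> VA" "norm x = 1" "\<forall>j<i. inner x (u j) = 0"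
       "y \<in> VB" "norm y = 1" "\<forall>j<i. inner y (v j) = 0" for i x y
    using PV that unfolding c_def by blast
  have uu: "inner (u i) (u j) = (if i = j then 1 else 0)" if "i < k" "j < k" for i j
  proof -
    consider "i = j" | "j < i" | "i < j" by linarith
    then show ?thesis
    proof cases
      case 1 then show ?thesis using nu[OF that(1)] by (simp add: norm_eq_1)
    next
      case 2 then show ?thesis using PV that by auto
    next
      case 3 then show ?thesis using PV that by (auto simp: inner_commute)
    qed
  qed
  have vv: "inner (v i) (v j) = (if i = j then 1 else 0)" if "i < k" "j < k" for i j
  proof -
    consider "i = j" | "j < i" | "i < j" by linarith
    then show ?thesis
    proof cases
      case 1 then show ?thesis using nv[OF that(1)] by (simp add: norm_eq_1)
    next
      case 2 then show ?thesis using PV that by auto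
    next
      case 3 then show ?thesis using PV that by (auto simp: inner_commute)
    qed
  qed
  have c0: "c i \<ge> 0" if "i < k" for i
  proof -
    have "inner (u i) (- v i) \<le> c i"
      using that uA nu vB nv uu vv
      by (intro maxi) (auto simp: subspace_neg assms(2) inner_commute)
    then show ?thesis unfolding c_def by simp
  qed
  have c1: "c i \<le> 1" if "i < k" for i
    using norm_cauchy_schwarz[of "u i" "v i"] nu[OF that] nv[OF that] unfolding c_def by simp
  have cross: "inner (u i) (v j) = 0" if "i < k" "j < k" "i \<noteq> j" for i j
  proof (cases "i < j")
    case True
    define s where "s = inner (u i) (v j)"
    define r where "r = sqrt ((c i)\<^sup>2 + s\<^sup>2)"
    show ?thesis
    proof (rule ccontr)
      assume "inner (u i) (v j) \<noteq> 0"
      then have "s \<noteq> 0" unfolding s_def .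
      then have r0: "r > 0" unfolding r_def by (simp add: add_nonneg_pos)
      have rr: "r * r = c i * c i + s * s" unfolding r_def by (simp add: power2_eq_square[symmetric])
      define y where "y = (1 / r) *\<^sub>R (c i *\<^sub>R v i + s *\<^sub>R v j)"
      have iz: "inner (c i *\<^sub>R v i + s *\<^sub>R v j) (c i *\<^sub>R v i + s *\<^sub>R v j) = c i * c i + s * s"
        using vv that by (simp add: inner_add_left inner_add_right inner_commute)
      have yB: "y \<in> VB" unfolding y_def using assms(2) vB that
        by (intro subspace_scale subspace_add) auto
      have ny: "norm y = 1" unfolding norm_eq_1 y_def inner_scaleR_left inner_scaleR_right iz rr[symmetric]
        using r0 by simp
      have yo: "\<forall>l<i. inner y (v l) = 0" unfolding y_def using vv that True
        by (auto simp: inner_add_left)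
      have uo: "\<forall>l<i. inner (u i) (u l) = 0" using uu that by auto
      have "inner (u i) y \<le> c i" using maxi[OF that(1) uA[OF that(1)] nu[OF that(1)] uo yB ny yo] .
      then have "(c i * c i + s * s) / sqrt ((c i)\<^sup>2 + s\<^sup>2) \<le> c i"
        unfolding y_def r_def[symmetric] by (simp add: inner_add_right c_def s_def power2_eq_square[symmetric])
      then have "s = 0" by (rule aux_cs)
      then show False using \<open>s \<noteq> 0\<close> by simp
    qed
  next
    case False
    then have ji: "j < i" using that by simp
    define s where "s = inner (u i) (v j)"
    define r where "r = sqrt ((c j)\<^sup>2 + s\<^sup>2)"
    show ?thesis
    proof (rule ccontr)
      assume "inner (u i) (v j) \<noteq> 0"
      then have "s \<noteq> 0" unfolding s_def .
      then have r0: "r > 0" unfolding r_def by (simp add: add_nonneg_pos)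
      have rr: "r * r = c j * c j + s * s" unfolding r_def by (simp add: power2_eq_square[symmetric])
      define x where "x = (1 / r) *\<^sub>R (c j *\<^sub>R u j + s *\<^sub>R u i)"
      have iz: "inner (c j *\<^sub>R u j + s *\<^sub>R u i) (c j *\<^sub>R u j + s *\<^sub>R u i) = c j * c j + s * s"
        using uu that by (simp add: inner_add_left inner_add_right inner_commute)
      have xA: "x \<in> VA" unfolding x_def using assms(1) uA that
        by (intro subspace_scale subspace_add) auto
      have nx: "norm x = 1" unfolding norm_eq_1 x_def inner_scaleR_left inner_scaleR_right iz rr[symmetric]
        using r0 by simp
      have xo: "\<forall>l<j. inner x (u l) = 0" unfolding x_def using uu that ji
        by (auto simp: inner_add_left)
      have vo: "\<forall>l<j. inner (v j) (v l) = 0" using vv that by auto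
      have "inner x (v j) \<le> c j" using maxi[OF that(2) xA nx xo vB[OF that(2)] nv[OF that(2)] vo] .
      then have "(c j * c j + s * s) / sqrt ((c j)\<^sup>2 + s\<^sup>2) \<le> c j"
        unfolding x_def r_def[symmetric] by (simp add: inner_add_left c_def s_def power2_eq_square[symmetric])
      then have "s = 0" by (rule aux_cs)
      then show False using \<open>s \<noteq> 0\<close> by simp
    qed
  qed
  define P where "P = {i. i < k \<and> arccos (inner (u i) (v i)) > 0}"
  have finP: "finite P" unfolding P_def by simp
  have Pc: "i \<in> P \<longleftrightarrow> i < k \<and> c i < 1" for i
  proof (cases "i < k")
    case True
    have "arccos (c i) > 0 \<longleftrightarrow> c i < 1"
    proof
      assume "arccos (c i) > 0"
      then show "c i < 1" using c1[OF True] by (cases "c i = 1") auto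
    next
      assume lt: "c i < 1"
      have "arccos (c i) \<noteq> 0"
      proof
        assume "arccos (c i) = 0"
        then have "cos (arccos (c i)) = 1" by simp
        then show False using cos_arccos[of "c i"] c0[OF True] c1[OF True] lt by simp
      qed
      then show "arccos (c i) > 0" using arccos_lbound[of "c i"] c0[OF True] c1[OF True] by simp
    qed
    then show ?thesis unfolding P_def c_def using True by simp
  qed (auto simp: P_def)
  define \<sigma> where "\<sigma> i = sqrt (1 - (c i)\<^sup>2)" for i
  have \<sigma>pos: "\<sigma> i > 0" if "i \<in> P" for i
  proof -
    have "(c i)\<^sup>2 < 1" using Pc[of i] that c0[of i] by (simp add: power_less_one_iff abs_square_less_1)
    then show ?thesis unfolding \<sigma>_def by simp
  qed
  have \<sigma>sq: "\<sigma> i * \<sigma> i = 1 - c i * c i" if "i \<in> P" for i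
  proof -
    have "(c i)\<^sup>2 \<le> 1" using Pc[of i] that c0[of i] by (simp add: abs_square_le_1)
    then show ?thesis unfolding \<sigma>_def by (simp add: power2_eq_square[symmetric])
  qed
  define t where "t i = v i - c i *\<^sub>R u i" for i
  have vt: "vtilde u v i = (1 / \<sigma> i) *\<^sub>R t i" if "i \<in> P" for i
  proof -
    have "i < k" using that Pc by auto
    then have ca: "-1 \<le> c i" "c i \<le> 1" using c0 c1 by (auto intro: order_trans[of _ 0])
    have "sin (arccos (c i)) = \<sigma> i" unfolding \<sigma>_def using sin_arccos[OF ca] .
    moreover have "cos (arccos (c i)) = c i" using cos_arccos[OF ca] .
    ultimately show ?thesis unfolding vtilde_def t_def c_def[symmetric] Let_def by simp
  qed
  have ut: "inner (u j) (t i) = 0" if "i < k" "j < k" for i j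
  proof (cases "i = j")
    case True then show ?thesis using uu that unfolding t_def c_def by (simp add: inner_diff_right)
  next
    case False then show ?thesis using uu cross that unfolding t_def by (simp add: inner_diff_right)
  qed
  have tt: "inner (t i) (t j) = (if i = j then 1 - c i * c i else 0)" if "i < k" "j < k" for i j
  proof (cases "i = j")
    case True
    have "inner (t i) (t i) = inner (v i) (v i) - 2 * c i * inner (u i) (v i) + c i * c i * inner (u i) (u i)"
      unfolding t_def by (simp add: inner_diff_left inner_diff_right inner_commute algebra_simps)
    then show ?thesis using True uu vv that unfolding c_def by simp
  next
    case False
    have "inner (t i) (t j) = inner (v i) (v j) - c j * inner (u j) (v i) - c i * inner (u i) (v j) + c i * c j * inner (u i) (u j)"
      unfolding t_def by (simp add: inner_diff_left inner_diff_right inner_commute algebra_simps)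
    then show ?thesis using False uu vv cross that by simp
  qed
  define f where "f = case_sum u (vtilde u v)"
  define I where "I = ({..<k} <+> P)"
  have finI: "finite I" unfolding I_def using finP by simp
  have fon: "inner (f a) (f b) = (if a = b then 1 else 0)" if "a \<in> I" "b \<in> I" for a b
  proof -
    have PK: "i \<in> P \<Longrightarrow> i < k" for i using Pc by auto
    show ?thesis
    using that unfolding I_def
    proof (elim PlusE)
      fix i j assume "a = Inl i" "i \<in> {..<k}" "b = Inl j" "j \<in> {..<k}"
      then show ?thesis using uu unfolding f_def by simp
    next
      fix i j assume "a = Inl i" "i \<in> {..<k}" "b = Inr j" "j \<in> P"
      then show ?thesis using ut PK unfolding f_def by (simp add: vt)
    next
      fix i j assume "a = Inr i" "i \<in> P" "b = Inl j" "j \<in> {..<k}"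
      then show ?thesis using ut PK unfolding f_def by (simp add: vt inner_commute)
    next
      fix i j assume a: "a = Inr i" "i \<in> P" "b = Inr j" "j \<in> P"
      then have "inner (f a) (f b) = (1 / \<sigma> i) * (1 / \<sigma> j) * inner (t i) (t j)"
        unfolding f_def by (simp add: vt)
      also have "\<dots> = (if a = b then 1 else 0)"
        using tt[of i j] PK a \<sigma>sq[of i] \<sigma>pos[of i] by auto
      finally show ?thesis .
    qed
  qed
  have PK: "i \<in> P \<Longrightarrow> i < k" for i using Pc by auto
  have SA: "VA = span (u ` {..<k})" using onb_span[OF assms(1) assms(3)] uA uu by blast
  have SB: "VB = span (v ` {..<k})" using onb_span[OF assms(2) assms(4)] vB vv by blast
  have fI: "f ` I = u ` {..<k} \<union> vtilde u v ` P" unfolding f_def I_def Plus_def image_Un image_image by simp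
  have subS: "subspace (subspace_sum VA VB)" unfolding subspace_sum_def
    using subspace_sums[OF assms(1) assms(2)] .
  have vtalt: "vtilde u v i = (- (c i / \<sigma> i)) *\<^sub>R u i + (1 / \<sigma> i) *\<^sub>R v i" if "i \<in> P" for i
    unfolding vt[OF that] t_def by (simp add: algebra_simps scaleR_diff_right)
  have vspan: "v i \<in> span (f ` I)" if "i < k" for i
  proof (cases "i \<in> P")
    case True
    have "v i = \<sigma> i *\<^sub>R vtilde u v i + c i *\<^sub>R u i"
      unfolding vt[OF True] t_def using \<sigma>pos[OF True] by simp
    moreover have "vtilde u v i \<in> span (f ` I)" "u i \<in> span (f ` I)"
      using True that unfolding fI by (auto intro: span_base)
    ultimately show ?thesis by (metis span_add span_scale)
  next
    case False
    then have "c i = 1" using Pc c1 that by force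
    then have "inner (v i - u i) (v i - u i) = 0"
      using uu[OF that that] vv[OF that that] unfolding c_def
      by (simp add: inner_diff_left inner_diff_right inner_commute)
    then have "v i = u i" by simp
    then show ?thesis using that unfolding fI by (auto intro: span_base)
  qed
  have SAB: "subspace_sum VA VB = span (f ` I)"
  proof
    show "span (f ` I) \<subseteq> subspace_sum VA VB"
    proof (rule span_minimal[OF _ subS])
      show "f ` I \<subseteq> subspace_sum VA VB"
      proof
        fix x assume "x \<in> f ` I"
        then consider i where "i < k" "x = u i" | i where "i \<in> P" "x = vtilde u v i"
          unfolding fI by auto
        then show "x \<in> subspace_sum VA VB"
        proof cases
          case 1
          then show ?thesis unfolding subspace_sum_def using uA[of i] subspace_0[OF assms(2)]
            by (metis (mono_tags, lifting) add.right_neutral mem_Collect_eq)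
        next
          case 2
          have "(- (c i / \<sigma> i)) *\<^sub>R u i \<in> VA" using uA PK 2 assms(1) by (intro subspace_scale) auto
          moreover have "(1 / \<sigma> i) *\<^sub>R v i \<in> VB" using vB PK 2 assms(2) by (simp add: subspace_scale)
          ultimately show ?thesis unfolding subspace_sum_def 2 vtalt[OF 2(1)] by blast
        qed
      qed
    qed
  next
    show "subspace_sum VA VB \<subseteq> span (f ` I)"
    proof
      fix x assume "x \<in> subspace_sum VA VB"
      then obtain a b where x: "x = a + b" "a \<in> VA" "b \<in> VB" unfolding subspace_sum_def by auto
      have "a \<in> span (f ` I)" using x(2) unfolding SA fI by (meson span_mono Un_upper1 subsetD)
      moreover have "b \<in> span (f ` I)"
      proof -
        have "span (v ` {..<k}) \<subseteq> span (f ` I)"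
          using vspan by (intro span_minimal) auto
        then show ?thesis using x(3) SB by auto
      qed
      ultimately show "x \<in> span (f ` I)" using x(1) by (simp add: span_add)
    qed
  qed
  define KA where "KA = norm (orth_proj VA w)"
  define KAB where "KAB = norm (orth_proj (subspace_sum VA VB) w)"
  define \<eta> where "\<eta> = private_info k u v w"
  have KA2: "KA\<^sup>2 = (\<Sum>i\<in>{..<k}. (inner w (u i))\<^sup>2)"
    unfolding KA_def SA by (rule onb_proj) (auto simp: uu)
  have KAB2: "KAB\<^sup>2 = (\<Sum>x\<in>I. (inner w (f x))\<^sup>2)"
    unfolding KAB_def SAB by (rule onb_proj[OF finI fon])
  have eta2: "\<eta>\<^sup>2 = (\<Sum>i\<in>P. (inner w (vtilde u v i))\<^sup>2)"
    unfolding \<eta>_def private_info_def P_def[symmetric] by (simp add: sum_nonneg)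
  have main: "KAB\<^sup>2 = KA\<^sup>2 + \<eta>\<^sup>2"
  proof -
    have "(\<Sum>x\<in>I. (inner w (f x))\<^sup>2) = (\<Sum>x\<in>{..<k}. (inner w (f (Inl x)))\<^sup>2) + (\<Sum>x\<in>P. (inner w (f (Inr x)))\<^sup>2)"
      unfolding I_def sum.Plus[OF finite_lessThan finP] comp_def ..
    also have "\<dots> = KA\<^sup>2 + \<eta>\<^sup>2" unfolding KA2 eta2 f_def by simp
    finally show ?thesis unfolding KAB2 .
  qed
  have fr: "KAB - KA = sqrt (KA\<^sup>2 + \<eta>\<^sup>2) - KA
        \<and> \<eta>\<^sup>2 / (2 * KA + \<eta>) \<le> KAB - KA \<and> KAB - KA \<le> \<eta>
        \<and> (KA = 0 \<longrightarrow> KAB - KA = \<eta>)"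
  proof (rule final_real[OF _ _ _ main])
    show "KA \<ge> 0" "KAB \<ge> 0" unfolding KA_def KAB_def by simp_all
    show "\<eta> \<ge> 0" unfolding \<eta>_def private_info_def by (simp add: sum_nonneg)
  qed
  note fr1 = fr[THEN conjunct1]
  note fr2 = fr[THEN conjunct2, THEN conjunct1]
  note fr3 = fr[THEN conjunct2, THEN conjunct2, THEN conjunct1]
  note fr4 = fr[THEN conjunct2, THEN conjunct2, THEN conjunct2]
  have mx: "max KA (norm (orth_proj VB w)) = KA" using assms(7) unfolding KA_def by simp
  have asym: "KA > 0 \<longrightarrow>
             (\<lambda>e::real. (sqrt (KA\<^sup>2 + e\<^sup>2) - KA) - e\<^sup>2 / (2 * KA)) \<in> o[at 0](\<lambda>e. e\<^sup>2)
           \<and> (\<lambda>e::real. e\<^sup>2 / (2 * KA + e) - e\<^sup>2 / (2 * KA)) \<in> o[at 0](\<lambda>e. e\<^sup>2)"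
  proof
    assume KA0: "KA > 0"
    show "(\<lambda>e::real. (sqrt (KA\<^sup>2 + e\<^sup>2) - KA) - e\<^sup>2 / (2 * KA)) \<in> o[at 0](\<lambda>e. e\<^sup>2)
           \<and> (\<lambda>e::real. e\<^sup>2 / (2 * KA + e) - e\<^sup>2 / (2 * KA)) \<in> o[at 0](\<lambda>e. e\<^sup>2)"
      by (rule conjI[OF asym1[OF KA0] asym2[OF KA0]])
  qed
  show ?thesis unfolding Let_def KA_def[symmetric] KAB_def[symmetric] \<eta>_def[symmetric] mx
    by (rule conjI[OF fr1 conjI[OF fr2 conjI[OF fr3 conjI[OF fr4 asym]]]])
qed
end
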